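(* Let $c=q_1^{a_1}\cdots q_\omega^{a_\omega}$ with $q_1,\dots,q_\omega$ distinct primes and $a_j\ge1$. If $a_i=1$ for some $i$, then $$E_c(q_i)=\frac{\varphi(c)}{q_i-1}-E_{c/q_i}(q_i).$$
   Context: $\varphi$ is Euler's totient function. For a positive integer $n$ with distinct prime factors $p_1,\dots,p_r$ ($r=0$ if $n=1$) and real $x\ne 0$, $$E_n(x)=\sum_{S\subseteq\{1,\dots,r\}}(-1)^{|S|}\left\lfloor \frac{n}{x\prod_{j\in S}p_j}\right\rfloor$$ (so $E_1(x)=\lfloor 1/x\rfloor$). *)

theory Defs
  imports "HOL-Analysis.Analysis" "HOL-Number_Theory.Number_Theory"
begin

definition E :: "nat \<Rightarrow> real \<Rightarrow> int" where
  "E n x = (\<Sum>S\<in>Pow (prime_factors n).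
      (-1) ^ card S * \<lfloor>real n / (x * real (\<Prod>S))\<rfloor>)"

end

theory Submission
  imports Defs
begin

lemma sum_Pow_insert_split:
  assumes "finite A" "q \<notin> A"
  shows "(\<Sum>S\<in>Pow (insert q A). f S) = (\<Sum>S\<in>Pow A. f S) + (\<Sum>S\<in>Pow A. f (insert q S))"
proof -
  have "(\<Sum>S\<in>Pow (insert q A). f S) = (\<Sum>S\<in>Pow A. f S) + (\<Sum>S\<in>insert q ` Pow A. f S)"
    unfolding Pow_insert by (rule sum.union_disjoint) (use assms in auto)
  moreover have "inj_on (insert q) (Pow A)"
    using assms by (auto simp: inj_on_def)
  ultimately show ?thesis by (simp add: sum.reindex)
qed

lemma prod_neg_recip:
  fixes S :: "nat set"
  assumes "finite S"
  shows "(\<Prod>x\<in>S. - 1 / real x) = (-1::real) ^ card S / real (\<Prod>S)"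
  using assms by (induction S rule: finite_induct) (auto simp: card_insert_if)

lemma alt_sum_recip:
  fixes A :: "nat set"
  assumes "finite A"
  shows "(\<Sum>S\<in>Pow A. (-1::real) ^ card S / real (\<Prod>S)) = (\<Prod>p\<in>A. 1 - 1 / real p)"
proof -
  have "(\<Prod>p\<in>A. 1 - 1 / real p) = (\<Prod>p\<in>A. (- 1 / real p) + 1)" by simp
  also have "\<dots> = (\<Sum>X\<in>Pow A. (\<Prod>x\<in>X. - 1 / real x) * (\<Prod>x\<in>A-X. 1))"
    by (rule prod_add[OF assms])
  also have "\<dots> = (\<Sum>S\<in>Pow A. (-1::real) ^ card S / real (\<Prod>S))"
  proof (rule sum.cong)
    fix S assume "S \<in> Pow A"
    then have "finite S" using assms finite_subset by auto
    then have "(\<Prod>x\<in>S. - 1 / real x) = (-1::real) ^ card S / real (\<Prod>S)"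
      by (rule prod_neg_recip)
    then show "(\<Prod>x\<in>S. - 1 / real x) * (\<Prod>x\<in>A-S. 1) = (-1::real) ^ card S / real (\<Prod>S)"
      by simp
  qed simp
  finally show ?thesis ..
qed

lemma floor_div_dvd:
  assumes "d dvd m"
  shows "\<lfloor>real m / real d\<rfloor> = int (m div d)"
proof -
  have "real (m div d) = real m / real d" using assms by (rule real_of_nat_div)
  then show ?thesis by (metis floor_of_nat)
qed

theorem lemma4:
  fixes c q :: nat
  assumes "c > 0" and "prime q" and "multiplicity q c = 1"
  shows "real_of_int (E c (real q)) = real (totient c) / (real q - 1) - real_of_int (E (c div q) (real q))"
proof -
  define m where "m = c div q"
  have qc: "q dvd c" using assms
    using not_dvd_imp_multiplicity_0[of q c] by force
  have c: "c = q * m" using qc m_def by simp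
  have q2: "q \<ge> 2" using assms prime_ge_2_nat by blast
  have m0: "m > 0" using c assms(1) by (cases m) auto
  have nd: "\<not> q dvd m"
  proof
    assume "q dvd m"
    then have "q * q dvd c" using c by simp
    then have "q ^ 2 dvd c" by (simp add: power2_eq_square)
    then have "2 \<le> multiplicity q c" using assms(1,2)
      by (intro multiplicity_geI) (auto simp: prime_gt_0_nat)
    then show False using assms by simp
  qed
  have cop: "coprime q m" using nd assms prime_imp_coprime by blast
  have pf: "prime_factors c = insert q (prime_factors m)"
    using c assms m0 by (simp add: prime_factors_product prime_prime_factors)
  have qn: "q \<notin> prime_factors m" using nd by auto
  let ?P = "prime_factors m"
  have fin: "finite ?P" by simp
  have Pdvd: "\<Prod>S dvd m" if "S \<subseteq> ?P" for S
  proof -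
    have "\<Prod>S dvd (\<Prod>p\<in>S. p ^ multiplicity p m)"
    proof (rule prod_dvd_prod)
      fix p assume "p \<in> S"
      then have "multiplicity p m > 0" using that m0 by (auto simp: prime_factors_multiplicity)
      then show "p dvd p ^ multiplicity p m" by (simp add: dvd_power)
    qed
    also have "\<dots> dvd (\<Prod>p\<in>?P. p ^ multiplicity p m)"
      using that by (intro prod_dvd_prod_subset) auto
    also have "\<dots> = m" using m0 by (rule prime_factorization_nat[symmetric])
    finally show ?thesis .
  qed
  have Ppos: "\<Prod>S > 0" if "S \<subseteq> ?P" for S
    using Pdvd[OF that] m0 by (metis dvd_0_left_iff gr0I)
  have step: "(-1) ^ card S * \<lfloor>real c / (real q * real (\<Prod>S))\<rfloor>
      + (-1) ^ card (insert q S) * \<lfloor>real c / (real q * real (\<Prod>(insert q S)))\<rfloor>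
      = (-1) ^ card S * int (m div \<Prod>S) - (-1) ^ card S * \<lfloor>real m / (real q * real (\<Prod>S))\<rfloor>"
    if S: "S \<in> Pow ?P" for S
  proof -
    have fS: "finite S" using S fin finite_subset by auto
    have qS: "q \<notin> S" using S qn by auto
    have e1: "real c / (real q * real (\<Prod>S)) = real m / real (\<Prod>S)"
      using c q2 by simp
    have e2: "real c / (real q * real (\<Prod>(insert q S))) = real m / (real q * real (\<Prod>S))"
      using c q2 fS qS by simp
    have pd: "\<Prod>S dvd m" using S by (intro Pdvd) auto
    have ins: "\<Prod>(insert q S) = q * \<Prod>S" "card (insert q S) = Suc (card S)"
      using fS qS by auto
    show ?thesis unfolding e1 floor_div_dvd[OF pd] ins using q2 by (simp add: c)
  qed
  define f where "f = (\<lambda>S. (-1::int) ^ card S * \<lfloor>real c / (real q * real (\<Prod>S))\<rfloor>)"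
  have "E c (real q) = (\<Sum>S\<in>Pow ?P. f S) + (\<Sum>S\<in>Pow ?P. f (insert q S))"
    unfolding E_def pf f_def by (rule sum_Pow_insert_split[OF fin qn])
  also have "\<dots> = (\<Sum>S\<in>Pow ?P. f S + f (insert q S))"
    by (rule sum.distrib[symmetric])
  also have "\<dots> = (\<Sum>S\<in>Pow ?P. (-1) ^ card S * int (m div \<Prod>S)
        - (-1) ^ card S * \<lfloor>real m / (real q * real (\<Prod>S))\<rfloor>)"
    by (rule sum.cong) (simp_all only: f_def step)
  also have "\<dots> = (\<Sum>S\<in>Pow ?P. (-1) ^ card S * int (m div \<Prod>S)) - E m (real q)"
    unfolding E_def by (rule sum_subtractf)
  finally have EE: "E c (real q) = (\<Sum>S\<in>Pow ?P. (-1) ^ card S * int (m div \<Prod>S)) - E m (real q)" .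
  have tm: "real_of_int (\<Sum>S\<in>Pow ?P. (-1) ^ card S * int (m div \<Prod>S)) = real (totient m)"
  proof -
    have "real_of_int (\<Sum>S\<in>Pow ?P. (-1) ^ card S * int (m div \<Prod>S))
        = (\<Sum>S\<in>Pow ?P. real m * ((-1::real) ^ card S / real (\<Prod>S)))"
      unfolding of_int_sum
    proof (rule sum.cong)
      fix S assume "S \<in> Pow ?P"
      then have pd: "\<Prod>S dvd m" by (intro Pdvd) auto
      have "real (m div \<Prod>S) = real m / real (\<Prod>S)" by (rule real_of_nat_div[OF pd])
      then show "real_of_int ((-1) ^ card S * int (m div \<Prod>S)) = real m * ((-1::real) ^ card S / real (\<Prod>S))"
        by simp
    qed simp
    also have "\<dots> = real m * (\<Prod>p\<in>?P. 1 - 1 / real p)"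
      unfolding sum_distrib_left[symmetric] alt_sum_recip[OF fin] ..
    also have "\<dots> = real (totient m)" by (simp add: totient_formula2)
    finally show ?thesis .
  qed
  have "real (totient c) = (real q - 1) * real (totient m)"
    using c cop assms q2 by (simp add: totient_mult_coprime totient_prime of_nat_diff)
  then have tc: "real (totient c) / (real q - 1) = real (totient m)" using q2 by simp
  have "real_of_int (E c (real q)) = real (totient m) - real_of_int (E m (real q))"
    using arg_cong[of _ _ real_of_int, OF EE] unfolding of_int_diff tm .
  then show ?thesis unfolding tc m_def .
qed

end
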